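(* Let $\{\alpha_n\}_{n\ge0}$ be a sequence in the open unit disk $\mathbb{D}$, $\rho_n=\sqrt{1-|\alpha_n|^2}$, and for $z\in\partial\mathbb{D}$ let $S_n(z)=\rho_{n-1}^{-1}\begin{pmatrix} z & -\overline{\alpha_{n-1}}\\ -z\alpha_{n-1} & 1\end{pmatrix}$ ($n\ge1$), $T_n(z)=S_n(z)S_{n-1}(z)\cdots S_1(z)$, $T_0(z)=I$. Define $\begin{pmatrix}\varphi_n(z)\\ \varphi_n^\dagger(z)\end{pmatrix}=T_n(z)\begin{pmatrix}1\\1\end{pmatrix}$ and $\begin{pmatrix}\psi_n(z)\\ \psi_n^\dagger(z)\end{pmatrix}=T_n(z)\begin{pmatrix}1\\-1\end{pmatrix}$. Let $z,z'\in\partial\mathbb{D}$ and let $\vec w_n=\begin{pmatrix}w_n\\ w_n^\dagger\end{pmatrix}=T_n(z)\vec w_0$ and $\vec w'_n=\begin{pmatrix}w'_n\\ w'^\dagger_n\end{pmatrix}=T_n(z')\vec w'_0$ with $\vec w_0=\vec w'_0$. Then for every $n\ge0$, $$w'_n=w_n+(z'-z)\sum_{m=0}^{n-1}\frac{1}{2z^{m+1}}\big(\varphi_m^\dagger(z)\psi_n(z)-\varphi_n(z)\psi_m^\dagger(z)\big)w'_m$$ and $$w'^\dagger_n=w_n^\dagger+(z'-z)\sum_{m=0}^{n-1}\frac{1}{2z^{m+1}}\big(\varphi_m^\dagger(z)\psi_n^\dagger(z)-\varphi_n^\dagger(z)\psi_m^\dagger(z)\big)w'_m.$$ *)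

theory Defs
  imports "HOL-Analysis.Analysis"
begin

text \<open>Column vectors in C^2 are represented as pairs (top, bottom).
  rho n = sqrt(1 - |alpha n|^2).\<close>

definition rho :: "(nat \<Rightarrow> complex) \<Rightarrow> nat \<Rightarrow> real" where
  "rho \<alpha> n = sqrt (1 - (cmod (\<alpha> n))\<^sup>2)"

definition S_apply :: "(nat \<Rightarrow> complex) \<Rightarrow> nat \<Rightarrow> complex \<Rightarrow> complex \<times> complex \<Rightarrow> complex \<times> complex" where
  "S_apply \<alpha> n z w =
     (let u = fst w; v = snd w; r = complex_of_real (rho \<alpha> (n - 1)) in
       ((z * u - cnj (\<alpha> (n - 1)) * v) / r, (- z * \<alpha> (n - 1) * u + v) / r))"

fun T_apply :: "(nat \<Rightarrow> complex) \<Rightarrow> nat \<Rightarrow> complex \<Rightarrow> complex \<times> complex \<Rightarrow> complex \<times> complex" where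
  "T_apply \<alpha> 0 z w = w"
| "T_apply \<alpha> (Suc n) z w = S_apply \<alpha> (Suc n) z (T_apply \<alpha> n z w)"

definition phi :: "(nat \<Rightarrow> complex) \<Rightarrow> nat \<Rightarrow> complex \<Rightarrow> complex" where
  "phi \<alpha> n z = fst (T_apply \<alpha> n z (1, 1))"
definition phi_dag :: "(nat \<Rightarrow> complex) \<Rightarrow> nat \<Rightarrow> complex \<Rightarrow> complex" where
  "phi_dag \<alpha> n z = snd (T_apply \<alpha> n z (1, 1))"
definition psi :: "(nat \<Rightarrow> complex) \<Rightarrow> nat \<Rightarrow> complex \<Rightarrow> complex" where
  "psi \<alpha> n z = fst (T_apply \<alpha> n z (1, -1))"
definition psi_dag :: "(nat \<Rightarrow> complex) \<Rightarrow> nat \<Rightarrow> complex \<Rightarrow> complex" where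
  "psi_dag \<alpha> n z = snd (T_apply \<alpha> n z (1, -1))"

end

theory Submission
  imports Defs
begin

lemma rho_sq:
  assumes "cmod a < 1"
  shows "(complex_of_real (sqrt (1 - (cmod a)\<^sup>2)))\<^sup>2 = 1 - a * cnj a"
proof -
  have "(cmod a)\<^sup>2 \<le> 1" using assms by (simp add: abs_square_le_1 less_imp_le)
  then have "(sqrt (1 - (cmod a)\<^sup>2))\<^sup>2 = 1 - (cmod a)\<^sup>2" by simp
  then have "(complex_of_real (sqrt (1 - (cmod a)\<^sup>2)))\<^sup>2 = complex_of_real (1 - (cmod a)\<^sup>2)"
    by (simp only: of_real_power[symmetric])
  also have "\<dots> = 1 - a * cnj a" by (simp only: of_real_diff of_real_1 complex_norm_square)
  finally show ?thesis .
qed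

lemma rho_nz:
  assumes "cmod a < 1"
  shows "complex_of_real (sqrt (1 - (cmod a)\<^sup>2)) \<noteq> 0"
proof -
  have "(cmod a)\<^sup>2 < 1" using assms by (simp add: power_less_one_iff abs_square_less_1)
  then show ?thesis by simp
qed

lemma T_det:
  assumes "\<And>k. cmod (\<alpha> k) < 1"
  shows "fst (T_apply \<alpha> n z a) * snd (T_apply \<alpha> n z b) - snd (T_apply \<alpha> n z a) * fst (T_apply \<alpha> n z b)
     = z ^ n * (fst a * snd b - snd a * fst b)"
proof (induction n)
  case 0
  then show ?case by simp
next
  case (Suc n)
  define r where "r = complex_of_real (rho \<alpha> n)"
  have r2: "r^2 = 1 - \<alpha> n * cnj (\<alpha> n)" unfolding r_def rho_def using rho_sq assms by blast
  have rnz: "r \<noteq> 0" unfolding r_def rho_def using rho_nz assms by blast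
  obtain u v where uv: "T_apply \<alpha> n z a = (u, v)" by (metis prod.exhaust)
  obtain u' v' where uv': "T_apply \<alpha> n z b = (u', v')" by (metis prod.exhaust)
  have IH: "u * v' - v * u' = z ^ n * (fst a * snd b - snd a * fst b)" using Suc uv uv' by simp
  have "fst (T_apply \<alpha> (Suc n) z a) * snd (T_apply \<alpha> (Suc n) z b) - snd (T_apply \<alpha> (Suc n) z a) * fst (T_apply \<alpha> (Suc n) z b)
      = (z * u - cnj (\<alpha> n) * v) / r * ((- z * \<alpha> n * u' + v') / r) - (- z * \<alpha> n * u + v) / r * ((z * u' - cnj (\<alpha> n) * v') / r)"
    using uv uv' by (simp add: S_apply_def Let_def r_def)
  also have "\<dots> = ((z * u - cnj (\<alpha> n) * v) * (- z * \<alpha> n * u' + v') - (- z * \<alpha> n * u + v) * (z * u' - cnj (\<alpha> n) * v')) / r^2"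
    unfolding times_divide_times_eq power2_eq_square by (rule diff_divide_distrib[symmetric])
  also have "\<dots> = z * (1 - \<alpha> n * cnj (\<alpha> n)) * (u * v' - v * u') / r^2"
  proof -
    have "(z * u - cnj (\<alpha> n) * v) * (- z * \<alpha> n * u' + v') - (- z * \<alpha> n * u + v) * (z * u' - cnj (\<alpha> n) * v')
      = z * (1 - \<alpha> n * cnj (\<alpha> n)) * (u * v' - v * u')" by (simp add: algebra_simps)
    then show ?thesis by (rule arg_cong)
  qed
  also have "\<dots> = z * (u * v' - v * u')" by (simp add: r2[symmetric] rnz)
  finally show ?case using IH by simp
qed

lemma L1: fixes k p z q d s r t u y w :: complex
  shows "k * (p * ((z * q - d * s)/r) - (z * t - d * u)/r * y) * w = (z * (k * w * (p * q - t * y)) - d * (k * w * (p * s - u * y)))/r"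
  unfolding divide_inverse by (simp add: algebra_simps)

lemma L2: fixes k p z q e s r t u y w :: complex
  shows "k * (p * ((-z * e * q + s)/r) - (-z * e * t + u)/r * y) * w = (-z * e * (k * w * (p * q - t * y)) + k * w * (p * s - u * y))/r"
  unfolding divide_inverse by (simp add: algebra_simps)

theorem mainTheorem3:
  fixes \<alpha> :: "nat \<Rightarrow> complex" and z z' :: complex and w0 :: "complex \<times> complex" and n :: nat
  assumes "\<And>k. cmod (\<alpha> k) < 1"
    and "cmod z = 1" and "cmod z' = 1"
  shows "fst (T_apply \<alpha> n z' w0) = fst (T_apply \<alpha> n z w0)
           + (z' - z) * (\<Sum>m<n. (1 / (2 * z ^ (m + 1))) *
               (phi_dag \<alpha> m z * psi \<alpha> n z - phi \<alpha> n z * psi_dag \<alpha> m z) * fst (T_apply \<alpha> m z' w0))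
       \<and> snd (T_apply \<alpha> n z' w0) = snd (T_apply \<alpha> n z w0)
           + (z' - z) * (\<Sum>m<n. (1 / (2 * z ^ (m + 1))) *
               (phi_dag \<alpha> m z * psi_dag \<alpha> n z - phi_dag \<alpha> n z * psi_dag \<alpha> m z) * fst (T_apply \<alpha> m z' w0))"
proof (induction n)
  case 0
  then show ?case by simp
next
  case (Suc n)
  define W where "W m = fst (T_apply \<alpha> m z' w0)" for m
  define c where "c m = 1 / (2 * z ^ (m + 1)) * W m" for m
  define r where "r = complex_of_real (rho \<alpha> n)"
  define a where "a = \<alpha> n"
  have rnz: "r \<noteq> 0" unfolding r_def rho_def using rho_nz assms by blast
  have znz: "z \<noteq> 0" using assms(2) by auto
  have det: "phi_dag \<alpha> n z * psi \<alpha> n z - phi \<alpha> n z * psi_dag \<alpha> n z = 2 * z ^ n"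
    using T_det[OF assms(1), where n=n and z=z and a="(1,1)" and b="(1,-1)"] unfolding phi_def phi_dag_def psi_def psi_dag_def
    by (simp add: algebra_simps)
  have phiS: "phi \<alpha> (Suc n) z = (z * phi \<alpha> n z - cnj a * phi_dag \<alpha> n z) / r"
    "phi_dag \<alpha> (Suc n) z = (- z * a * phi \<alpha> n z + phi_dag \<alpha> n z) / r"
    "psi \<alpha> (Suc n) z = (z * psi \<alpha> n z - cnj a * psi_dag \<alpha> n z) / r"
    "psi_dag \<alpha> (Suc n) z = (- z * a * psi \<alpha> n z + psi_dag \<alpha> n z) / r"
    unfolding phi_def phi_dag_def psi_def psi_dag_def a_def r_def
    by (simp_all add: S_apply_def Let_def)
  define A where "A = (\<Sum>m<n. c m * (phi_dag \<alpha> m z * psi \<alpha> n z - phi \<alpha> n z * psi_dag \<alpha> m z))"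
  define B where "B = (\<Sum>m<n. c m * (phi_dag \<alpha> m z * psi_dag \<alpha> n z - phi_dag \<alpha> n z * psi_dag \<alpha> m z))"
  have eqA: "(\<Sum>m<n. (1 / (2 * z ^ (m + 1))) *
               (phi_dag \<alpha> m z * psi \<alpha> n z - phi \<alpha> n z * psi_dag \<alpha> m z) * fst (T_apply \<alpha> m z' w0)) = A"
    unfolding A_def c_def W_def by (rule sum.cong) (auto simp: algebra_simps)
  have eqB: "(\<Sum>m<n. (1 / (2 * z ^ (m + 1))) *
               (phi_dag \<alpha> m z * psi_dag \<alpha> n z - phi_dag \<alpha> n z * psi_dag \<alpha> m z) * fst (T_apply \<alpha> m z' w0)) = B"
    unfolding B_def c_def W_def by (rule sum.cong) (auto simp: algebra_simps)
  define A' where "A' = (\<Sum>m<Suc n. 1 / (2 * z ^ (m + 1)) * W m * (phi_dag \<alpha> m z * psi \<alpha> n z - phi \<alpha> n z * psi_dag \<alpha> m z))"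
  define B' where "B' = (\<Sum>m<Suc n. 1 / (2 * z ^ (m + 1)) * W m * (phi_dag \<alpha> m z * psi_dag \<alpha> n z - phi_dag \<alpha> n z * psi_dag \<alpha> m z))"
  have cn: "z * (1 / (2 * z ^ (n + 1)) * W n * (2 * z ^ n)) = W n" using znz by simp
  have A'A: "z * A' = z * A + W n"
    unfolding A'_def sum.lessThan_Suc det A_def c_def distrib_left cn ..
  have B'B: "B' = B"
    unfolding B'_def sum.lessThan_Suc B_def c_def by simp
  have eqA': "(\<Sum>m<Suc n. (1 / (2 * z ^ (m + 1))) *
               (phi_dag \<alpha> m z * psi \<alpha> (Suc n) z - phi \<alpha> (Suc n) z * psi_dag \<alpha> m z) * fst (T_apply \<alpha> m z' w0))
      = (z * A' - cnj a * B') / r"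
  proof -
    have "(\<Sum>m<Suc n. (1 / (2 * z ^ (m + 1))) *
               (phi_dag \<alpha> m z * psi \<alpha> (Suc n) z - phi \<alpha> (Suc n) z * psi_dag \<alpha> m z) * fst (T_apply \<alpha> m z' w0))
      = (\<Sum>m<Suc n. (z * (1 / (2 * z ^ (m + 1)) * W m * (phi_dag \<alpha> m z * psi \<alpha> n z - phi \<alpha> n z * psi_dag \<alpha> m z))
           - cnj a * (1 / (2 * z ^ (m + 1)) * W m * (phi_dag \<alpha> m z * psi_dag \<alpha> n z - phi_dag \<alpha> n z * psi_dag \<alpha> m z))) / r)"
      unfolding phiS W_def by (rule sum.cong[OF refl], rule L1)
    also have "\<dots> = (z * A' - cnj a * B') / r"
      unfolding A'_def B'_def sum_divide_distrib[symmetric] sum_subtractf sum_distrib_left[symmetric] ..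
    finally show ?thesis .
  qed
  have eqB': "(\<Sum>m<Suc n. (1 / (2 * z ^ (m + 1))) *
               (phi_dag \<alpha> m z * psi_dag \<alpha> (Suc n) z - phi_dag \<alpha> (Suc n) z * psi_dag \<alpha> m z) * fst (T_apply \<alpha> m z' w0))
      = (- z * a * A' + B') / r"
  proof -
    have "(\<Sum>m<Suc n. (1 / (2 * z ^ (m + 1))) *
               (phi_dag \<alpha> m z * psi_dag \<alpha> (Suc n) z - phi_dag \<alpha> (Suc n) z * psi_dag \<alpha> m z) * fst (T_apply \<alpha> m z' w0))
      = (\<Sum>m<Suc n. (- z * a * (1 / (2 * z ^ (m + 1)) * W m * (phi_dag \<alpha> m z * psi \<alpha> n z - phi \<alpha> n z * psi_dag \<alpha> m z))
           + (1 / (2 * z ^ (m + 1)) * W m * (phi_dag \<alpha> m z * psi_dag \<alpha> n z - phi_dag \<alpha> n z * psi_dag \<alpha> m z))) / r)"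
      unfolding phiS W_def by (rule sum.cong[OF refl], rule L2)
    also have "\<dots> = (- z * a * A' + B') / r"
      unfolding A'_def B'_def sum_divide_distrib[symmetric] sum.distrib sum_distrib_left[symmetric] ..
    finally show ?thesis .
  qed
  obtain x1 x2 where x: "T_apply \<alpha> n z' w0 = (x1, x2)" by (metis prod.exhaust)
  obtain y1 y2 where y: "T_apply \<alpha> n z w0 = (y1, y2)" by (metis prod.exhaust)
  have IH1: "x1 = y1 + (z' - z) * A" and IH2: "x2 = y2 + (z' - z) * B"
    using Suc.IH eqA eqB x y by auto
  have Wn: "W n = x1" using x W_def by simp
  have T1: "T_apply \<alpha> (Suc n) z' w0 = ((z' * x1 - cnj a * x2) / r, (- z' * a * x1 + x2) / r)"
    using x by (simp add: S_apply_def Let_def a_def r_def)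
  have T2: "T_apply \<alpha> (Suc n) z w0 = ((z * y1 - cnj a * y2) / r, (- z * a * y1 + y2) / r)"
    using y by (simp add: S_apply_def Let_def a_def r_def)
  have zA: "z * a * A' = z * a * A + a * x1" using A'A Wn by (metis distrib_left mult.assoc mult.commute)
  have num1: "z' * x1 - cnj a * x2 = (z * y1 - cnj a * y2) + (z' - z) * (z * A' - cnj a * B')"
    unfolding A'A B'B Wn unfolding IH1 IH2 by (simp add: algebra_simps)
  have num2: "- z' * a * x1 + x2 = (- z * a * y1 + y2) + (z' - z) * (- z * a * A' + B')"
    unfolding B'B mult_minus_left zA unfolding IH1 IH2 by (simp add: algebra_simps)
  have e1: "(z' * x1 - cnj a * x2) / r = (z * y1 - cnj a * y2) / r + (z' - z) * ((z * A' - cnj a * B') / r)"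
    unfolding num1 add_divide_distrib times_divide_eq_right ..
  have e2: "(- z' * a * x1 + x2) / r = (- z * a * y1 + y2) / r + (z' - z) * ((- z * a * A' + B') / r)"
    unfolding num2 add_divide_distrib[of "- z * a * y1 + y2"] times_divide_eq_right ..
  show ?case unfolding eqA' eqB' T1 T2 fst_conv snd_conv using e1 e2 by (rule conjI)
qed

end
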